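(* Let $c:[\omega_2]^2\to\omega$, let $k\in\omega$, and let $A\in[\omega_1]^{\aleph_1}$ and $B\in[\omega_2\setminus\omega_1]^{\aleph_1}$ satisfy: (1) for any $\alpha_0,\alpha_1\in A$ there are uncountably many $\beta\in B$ with $c(\alpha_0,\beta)=k=c(\alpha_1,\beta)$; and (2) for any $\beta_0\in B$ there are uncountably many $\alpha\in A$ with $c(\alpha,\beta_0)=k$. Then $(A\cup B, c^{-1}(k)\cap[A\cup B]^2)$ is highly connected.
   Context: A graph $G=(X,E)$ is highly connected if for every $Y\subseteq X$ with $|Y|<|X|$, the induced subgraph $(X\setminus Y,E\cap[X\setminus Y]^2)$ is connected. *)

theory Defs
  imports Main "HOL-Library.Countable_Set"
begin

text \<open>The ambient ordinal omega_2 is represented by a type carrying a well-order r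
  which is a cardinal order of order type cardSuc (cardSuc natLeq) = omega_2.\<close>

definition is_omega2 :: "'a rel \<Rightarrow> bool" where
  "is_omega2 r \<longleftrightarrow> Card_order r \<and> Field r = UNIV \<and>
     (r, cardSuc (cardSuc natLeq)) \<in> ordIso"

definition omega1_part :: "'a rel \<Rightarrow> 'a set" where
  "omega1_part r = {x. countable (underS r x)}"

definition size_aleph1 :: "'a set \<Rightarrow> bool" where
  "size_aleph1 A \<longleftrightarrow> (card_of A, cardSuc natLeq) \<in> ordIso"

definition graph_connected :: "'a set \<Rightarrow> 'a set set \<Rightarrow> bool" where
  "graph_connected V E \<longleftrightarrow>
     (\<forall>u\<in>V. \<forall>v\<in>V. \<exists>p. p \<noteq> [] \<and> hd p = u \<and> last p = v \<and> set p \<subseteq> V \<and>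
        (\<forall>i < length p - 1. {p ! i, p ! Suc i} \<in> E))"

definition highly_connected :: "'a set \<Rightarrow> 'a set set \<Rightarrow> bool" where
  "highly_connected X E \<longleftrightarrow>
     (\<forall>Y. Y \<subseteq> X \<longrightarrow> (card_of Y, card_of X) \<in> ordLess \<longrightarrow>
        graph_connected (X - Y) (E \<inter> {e. e \<subseteq> X - Y}))"

definition colour_class :: "('a set \<Rightarrow> nat) \<Rightarrow> nat \<Rightarrow> 'a set \<Rightarrow> 'a set set" where
  "colour_class c k X = {e. e \<subseteq> X \<and> card e = 2 \<and> c e = k}"

end

theory Submission
  imports Defs "HOL-Library.Countable_Set_Type"
begin

lemma Ycount: assumes "size_aleph1 A" "size_aleph1 B" "(card_of Y, card_of (A \<union> B)) \<in> ordLess" shows "countable Y"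
proof -
  have "(card_of (A \<union> B), cardSuc natLeq) \<in> ordLeq" using assms unfolding size_aleph1_def 
  by (metis Field_natLeq cardSuc_Card_order cardSuc_finite
    card_of_Un_ordLeq_infinite_Field infinite_UNIV_nat natLeq_Card_order
    ordIso_iff_ordLeq)
  then have "(card_of Y, cardSuc natLeq) \<in> ordLess" using assms(3) ordLess_ordLeq_trans by blast
  then have "(card_of Y, natLeq) \<in> ordLeq"
    using cardSuc_ordLeq_ordLess natLeq_Card_order card_of_Card_order by blast
  then show ?thesis using countable_card_le_natLeq by blast
qed

theorem mainTheorem3:
  fixes r :: "'a rel" and c :: "'a set \<Rightarrow> nat" and k :: nat and A B :: "'a set"
  assumes "is_omega2 r"
    and "A \<subseteq> omega1_part r" and "size_aleph1 A"
    and "B \<subseteq> UNIV - omega1_part r" and "size_aleph1 B"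
    and "\<forall>\<alpha>0\<in>A. \<forall>\<alpha>1\<in>A. \<not> countable {\<beta>\<in>B. c {\<alpha>0, \<beta>} = k \<and> c {\<alpha>1, \<beta>} = k}"
    and "\<forall>\<beta>0\<in>B. \<not> countable {\<alpha>\<in>A. c {\<alpha>, \<beta>0} = k}"
  shows "highly_connected (A \<union> B) (colour_class c k (A \<union> B))"
  unfolding highly_connected_def
proof (intro allI impI)
  fix Y assume YX: "Y \<subseteq> A \<union> B" and "(card_of Y, card_of (A \<union> B)) \<in> ordLess"
  then have cY: "countable Y" using Ycount assms(3,5) by blast
  have disj: "A \<inter> B = {}" using assms(2,4) by blast
  let ?V = "A \<union> B - Y"
  let ?E = "colour_class c k (A \<union> B) \<inter> {e. e \<subseteq> ?V}"
  have edge: "{a, b} \<in> ?E" if "a \<in> A - Y" "b \<in> B - Y" "c {a, b} = k" for a b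
  proof -
    have "a \<noteq> b" using that disj by blast
    then show ?thesis using that unfolding colour_class_def by auto
  qed
  have toA: "\<exists>a\<in>A - Y. \<exists>p. p \<noteq> [] \<and> hd p = u \<and> last p = a \<and> set p \<subseteq> ?V \<and>
        (\<forall>i < length p - 1. {p ! i, p ! Suc i} \<in> ?E)" if u: "u \<in> ?V" for u
  proof (cases "u \<in> A")
    case True
    then show ?thesis using u by (intro bexI[of _ u] exI[of _ "[u]"]) auto
  next
    case False
    then have uB: "u \<in> B - Y" using u by blast
    have "\<not> countable {\<alpha>\<in>A. c {\<alpha>, u} = k}"
      using assms(7) uB by blast
    then have "\<not> countable ({\<alpha>\<in>A. c {\<alpha>, u} = k} - Y)"
      using cY uncountable_minus_countable by blast
    then have "{\<alpha>\<in>A. c {\<alpha>, u} = k} - Y \<noteq> {}" by (metis countable_empty)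
    then obtain a where a: "a \<in> A" "a \<notin> Y" "c {a, u} = k" by blast
    have e: "{u, a} \<in> ?E" using edge[of a u] a uB by (simp add: insert_commute)
    show ?thesis
      apply (intro bexI[of _ a] exI[of _ "[u, a]"])
      using a uB e by (auto simp: less_Suc_eq)
  qed
  show "graph_connected ?V ?E"
    unfolding graph_connected_def
  proof (intro ballI)
    fix u v assume u: "u \<in> ?V" and v: "v \<in> ?V"
    obtain a p where a: "a \<in> A - Y" and p: "p \<noteq> []" "hd p = u" "last p = a" "set p \<subseteq> ?V"
        "\<forall>i < length p - 1. {p ! i, p ! Suc i} \<in> ?E" using toA[OF u] by blast
    obtain b q where b: "b \<in> A - Y" and q: "q \<noteq> []" "hd q = v" "last q = b" "set q \<subseteq> ?V"
        "\<forall>i < length q - 1. {q ! i, q ! Suc i} \<in> ?E" using toA[OF v] by blast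
    have "\<not> countable {\<beta>\<in>B. c {a, \<beta>} = k \<and> c {b, \<beta>} = k}"
      using assms(6) a b by blast
    then have "\<not> countable ({\<beta>\<in>B. c {a, \<beta>} = k \<and> c {b, \<beta>} = k} - Y)"
      using cY uncountable_minus_countable by blast
    then have "{\<beta>\<in>B. c {a, \<beta>} = k \<and> c {b, \<beta>} = k} - Y \<noteq> {}" by (metis countable_empty)
    then obtain m where m: "m \<in> B" "m \<notin> Y" "c {a, m} = k" "c {b, m} = k" by blast
    have e1: "{a, m} \<in> ?E" using edge[of a m] a m by simp
    have e2: "{m, b} \<in> ?E" using edge[of b m] b m by (simp add: insert_commute)
    define w where "w = p @ [m] @ rev q"
    have path: "\<forall>i < length w - 1. {w ! i, w ! Suc i} \<in> ?E"
    proof (intro allI impI)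
      fix i assume i: "i < length w - 1"
      consider "i + 1 < length p" | "i + 1 = length p" | "i = length p" | "i > length p"
        by linarith
      then show "{w ! i, w ! Suc i} \<in> ?E"
      proof cases
        case 1 then show ?thesis using p(5) unfolding w_def by (auto simp: nth_append)
      next
        case 2
        then have "i = length p - 1" by simp
        then have "w ! i = last p" "w ! Suc i = m" unfolding w_def using p(1) 2
          by (auto simp: nth_append last_conv_nth)
        then show ?thesis using e1 p(3) by simp
      next
        case 3
        then have "w ! i = m" "w ! Suc i = last q" unfolding w_def using q(1)
          by (auto simp: nth_append last_conv_nth hd_rev[symmetric] hd_conv_nth)
        then show ?thesis using e2 q(3) by simp
      next
        case 4
        define j where "j = i - length p - 1"
        have ij: "i = length p + 1 + j" using 4 j_def by simp
        have jl: "j + 1 < length q" using i ij unfolding w_def by simp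
        have "w ! i = rev q ! j" "w ! Suc i = rev q ! Suc j" unfolding w_def ij
          by (auto simp: nth_append)
        moreover have "rev q ! j = q ! (length q - 1 - j)" "rev q ! Suc j = q ! (length q - 1 - Suc j)"
          using jl by (auto simp: rev_nth)
        moreover have "{q ! (length q - 1 - Suc j), q ! Suc (length q - 1 - Suc j)} \<in> ?E"
          using q(5) jl by auto
        moreover have "Suc (length q - 1 - Suc j) = length q - 1 - j" using jl by simp
        ultimately show ?thesis by (simp add: insert_commute)
      qed
    qed
    show "\<exists>p. p \<noteq> [] \<and> hd p = u \<and> last p = v \<and> set p \<subseteq> ?V \<and>
        (\<forall>i < length p - 1. {p ! i, p ! Suc i} \<in> ?E)"
      apply (intro exI[of _ w])
      using p q m path unfolding w_def by (auto simp: last_rev)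
  qed
qed

end
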